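(* Let Assumptions (A1) and (A2) from the context hold and let $\gamma>0$. Consider the estimator $$\dot{\mathbf z}(t)=-\gamma\,\mathbf z(t)+\mathbf u(t),\qquad \mathbf z(t_0)=\mathbf z_0,\qquad \mathbf x(t)=\mathbf z(t)+\boldsymbol\phi(t),$$ with input $$\mathbf u(t)=-(B\otimes I_r)\,K(t)\,\mathrm{sgn}\{(B^T\otimes I_r)\mathbf x(t)\},$$ where $K(t)\in\mathbb R^{r\ell\times r\ell}$ is diagonal with diagonal entries $\kappa_j(t)$, $j\in\{1,\dots,r\ell\}$, updated by $$\dot\kappa_j(t)=|y_j(t)|,\qquad \kappa_j(t_0)\ge 1,$$ and $\mathbf y(t)=(y_1(t),\dots,y_{r\ell}(t))^T=(B^T\otimes I_r)\mathbf x(t)$. Solutions of the resulting discontinuous system are understood in the Filippov sense. Then for every initial condition $\mathbf z_0\in\mathbb R^{nr}$ the average consensus error $\tilde{\mathbf x}(t)=\mathbf x(t)-\mathbf 1_n\otimes\bar\phi(t)$ satisfies $\lim_{t\to\infty}\tilde{\mathbf x}(t)=0$.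
   Context: There are $n$ agents $v_1,\dots,v_n$ communicating over an undirected graph $\mathcal G(\mathcal V,\mathcal E)$. Each undirected edge is regarded as two distinct directed edges, so the edge set is $\mathcal E=\{e_1,\dots,e_\ell\}\subseteq\mathcal V\times\mathcal V$. The incidence matrix $B=[b_{ij}]\in\{-1,0,1\}^{n\times\ell}$ has $b_{ij}=-1$ if edge $e_j$ leaves $v_i$, $b_{ij}=1$ if $e_j$ enters $v_i$, and $0$ otherwise (so $\mathbf 1_n^TB=0$ and the Laplacian is $L=\tfrac12BB^T$). $I_r$ is the $r\times r$ identity, $\mathbf 1_n$ the all-ones vector, $\otimes$ the Kronecker product, $(\cdot)^+$ the Moore–Penrose generalized inverse, and $M=I_n-\frac1n\mathbf 1_n\mathbf 1_n^T$. For vectors, $\mathrm{sgn}\{\cdot\}$ and $|\cdot|$ act componentwise, with $\mathrm{sgn}(0)=0$. Each agent $v_i$ has a continuously differentiable reference signal $\phi_i(t)\in\mathbb R^r$; $\boldsymbol\phi(t)=(\phi_1(t)^T,\dots,\phi_n(t)^T)^T\in\mathbb R^{nr}$ and $\bar\phi(t)=\frac1n\sum_{i=1}^n\phi_i(t)=\frac1n(\mathbf 1_n^T\otimes I_r)\boldsymbol\phi(t)$. The vector $\mathbf x(t)=(x_1(t)^T,\dots,x_n(t)^T)^T$ collects the agents' estimates of $\bar\phi(t)$. (A1) The graph $\mathcal G$ is connected and undirected. (A2) There exist constants $\varphi,\dot\varphi<\infty$ such that $\sup_{t\ge 0}\|(B^T\otimes I_r)\boldsymbol\phi(t)\|_\infty\le\varphi$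 and $\sup_{t\ge0}\|(B^T\otimes I_r)\dot{\boldsymbol\phi}(t)\|_\infty\le\dot\varphi$. Equivalently, $\|\phi_i(t)-\phi_j(t)\|_\infty\le\varphi$ and $\|\dot\phi_i(t)-\dot\phi_j(t)\|_\infty\le\dot\varphi$ for all $t$ and all $(v_i,v_j)\in\mathcal E$. *)

theory Defs
  imports "HOL-Analysis.Analysis"
begin

text \<open>Graph: agents are the elements of a finite type 'n, directed edges are the
elements of a finite type 'e; edge e leaves agent (etl e) and enters agent (ehd e).\<close>

definition undirected_connected :: "('e::finite \<Rightarrow> 'n::finite) \<Rightarrow> ('e \<Rightarrow> 'n) \<Rightarrow> bool" where
  "undirected_connected etl ehd \<longleftrightarrow>
     inj (\<lambda>e. (etl e, ehd e)) \<and>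
     (\<forall>e. etl e \<noteq> ehd e) \<and>
     (\<forall>e. \<exists>e'. etl e' = ehd e \<and> ehd e' = etl e) \<and>
     (\<forall>i j. (i, j) \<in> (range (\<lambda>e. (etl e, ehd e)))\<^sup>*)"

definition incidence :: "('e::finite \<Rightarrow> 'n::finite) \<Rightarrow> ('e \<Rightarrow> 'n) \<Rightarrow> real^'e^'n" where
  "incidence etl ehd = (\<chi> i e. if ehd e = i then 1 else if etl e = i then -1 else 0)"

definition kron :: "real^'b::finite^'a::finite \<Rightarrow> real^'d::finite^'c::finite \<Rightarrow> real^('b \<times> 'd)^('a \<times> 'c)" where
  "kron A C = (\<chi> p q. A $ fst p $ fst q * C $ snd p $ snd q)"

definition vkron :: "real^'a::finite \<Rightarrow> real^'c::finite \<Rightarrow> real^('a \<times> 'c)" where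
  "vkron a c = (\<chi> p. a $ fst p * c $ snd p)"

definition ones :: "real^'a::finite" where "ones = (\<chi> i. 1)"

definition diagm :: "real^'a::finite \<Rightarrow> real^'a^'a" where
  "diagm v = (\<chi> i j. if i = j then v $ i else 0)"

definition vsgn :: "real^'a::finite \<Rightarrow> real^'a" where "vsgn v = (\<chi> i. sgn (v $ i))"
definition vabs :: "real^'a::finite \<Rightarrow> real^'a" where "vabs v = (\<chi> i. \<bar>v $ i\<bar>)"

definition phibar :: "real^('n::finite \<times> 'r::finite) \<Rightarrow> real^'r" where
  "phibar ph = (\<chi> k. (1 / real CARD('n)) * (\<Sum>i\<in>UNIV. ph $ (i, k)))"

definition estimator_field ::
  "('e::finite \<Rightarrow> 'n::finite) \<Rightarrow> ('e \<Rightarrow> 'n) \<Rightarrow> real \<Rightarrow> (real \<Rightarrow> real^('n \<times> 'r::finite))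
   \<Rightarrow> real \<Rightarrow> (real^('n \<times> 'r)) \<times> (real^('e \<times> 'r)) \<Rightarrow> (real^('n \<times> 'r)) \<times> (real^('e \<times> 'r))" where
  "estimator_field etl ehd \<gamma> phi t s =
     (let z = fst s; \<kappa> = snd s;
          B = incidence etl ehd;
          x = z + phi t;
          y = kron (transpose B) (mat 1) *v x;
          u = - (kron B (mat 1) *v (diagm \<kappa> *v vsgn y))
      in (- \<gamma> *\<^sub>R z + u, vabs y))"

definition filippov_set :: "(real \<Rightarrow> 'a::euclidean_space \<Rightarrow> 'a) \<Rightarrow> real \<Rightarrow> 'a \<Rightarrow> 'a set" where
  "filippov_set f t x =
     (\<Inter>\<delta>\<in>{0<..}. \<Inter>N\<in>null_sets lebesgue. closure (convex hull (f t ` (ball x \<delta> - N))))"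

text \<open>Filippov solution on [t0, oo): locally absolutely continuous (i.e. the integral of
a locally Lebesgue integrable derivative) with derivative a.e. in the Filippov set.\<close>
definition filippov_solution :: "(real \<Rightarrow> 'a::euclidean_space \<Rightarrow> 'a) \<Rightarrow> real \<Rightarrow> (real \<Rightarrow> 'a) \<Rightarrow> bool" where
  "filippov_solution f t0 w \<longleftrightarrow>
     (\<exists>v. (\<forall>T\<ge>t0. v absolutely_integrable_on {t0..T}) \<and>
          (\<forall>t\<ge>t0. w t = w t0 + integral {t0..t} v) \<and>
          (AE t in lebesgue. t \<ge> t0 \<longrightarrow> v t \<in> filippov_set f t (w t)))"

end

theory Submission
  imports Defs
begin

lemma sq_local:
  fixes F f :: "real \<Rightarrow> real"
  assumes cd: "c \<le> d" and f: "f absolutely_integrable_on {c..d}"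
    and Fi: "(\<lambda>s. F s * f s) integrable_on {c..d}"
    and Fd: "F d = F c + integral {c..d} f"
    and close: "\<And>s. s \<in> {c..d} \<Longrightarrow> \<bar>F d + F c - 2 * F s\<bar> \<le> 2 * e"
  shows "\<bar>(F d)^2 - (F c)^2 - 2 * integral {c..d} (\<lambda>s. F s * f s)\<bar>
          \<le> 2 * e * integral {c..d} (\<lambda>s. \<bar>f s\<bar>)"
proof -
  have fi: "f integrable_on {c..d}" using f by (simp add: absolutely_integrable_on_def)
  have fa: "(\<lambda>s. \<bar>f s\<bar>) integrable_on {c..d}" using f by (simp add: absolutely_integrable_on_def)
  have "(F d)^2 - (F c)^2 = (F d + F c) * integral {c..d} f"
    using Fd by (simp add: power2_eq_square algebra_simps)
  also have "\<dots> = integral {c..d} (\<lambda>s. (F d + F c) * f s)" by simp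
  finally have "(F d)^2 - (F c)^2 - 2 * integral {c..d} (\<lambda>s. F s * f s)
     = integral {c..d} (\<lambda>s. (F d + F c) * f s) - integral {c..d} (\<lambda>s. 2 * (F s * f s))"
    by simp
  also have "\<dots> = integral {c..d} (\<lambda>s. (F d + F c - 2 * F s) * f s)"
  proof -
    have a1: "(\<lambda>s. (F d + F c) * f s) integrable_on {c..d}" by (intro integrable_on_mult_right fi)
    have a2: "(\<lambda>s. 2 * (F s * f s)) integrable_on {c..d}" by (intro integrable_on_mult_right Fi)
    show ?thesis by (subst integral_diff[OF a1 a2, symmetric]) (simp add: algebra_simps)
  qed
  finally have eq: "(F d)^2 - (F c)^2 - 2 * integral {c..d} (\<lambda>s. F s * f s)
       = integral {c..d} (\<lambda>s. (F d + F c - 2 * F s) * f s)" .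
  have i1: "(\<lambda>s. (F d + F c - 2 * F s) * f s) integrable_on {c..d}"
  proof -
    have "(\<lambda>s. (F d + F c) * f s - 2 * (F s * f s)) integrable_on {c..d}"
      by (intro integrable_diff integrable_on_mult_right fi Fi)
    then show ?thesis by (simp add: algebra_simps)
  qed
  have "norm (integral {c..d} (\<lambda>s. (F d + F c - 2 * F s) * f s))
        \<le> integral {c..d} (\<lambda>s. 2 * e * \<bar>f s\<bar>)"
  proof (rule integral_norm_bound_integral[OF i1])
    show "(\<lambda>s. 2 * e * \<bar>f s\<bar>) integrable_on {c..d}" using fa by (rule integrable_on_mult_right)
    fix s assume "s \<in> {c..d}"
    then show "norm ((F d + F c - 2 * F s) * f s) \<le> 2 * e * \<bar>f s\<bar>"
      using close[of s] by (simp add: abs_mult mult_right_mono)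
  qed
  then show ?thesis using eq by simp
qed

lemma sq_ftc:
  fixes F f :: "real \<Rightarrow> real"
  assumes ab: "a \<le> b" and f: "f absolutely_integrable_on {a..b}"
    and F: "\<And>t. t \<in> {a..b} \<Longrightarrow> F t = F a + integral {a..t} f"
  shows "(\<lambda>t. F t * f t) absolutely_integrable_on {a..b}"
    and "(F b)^2 - (F a)^2 = 2 * integral {a..b} (\<lambda>t. F t * f t)"
proof -
  have fi: "f integrable_on {a..b}" using f by (simp add: absolutely_integrable_on_def)
  have fa: "(\<lambda>s. \<bar>f s\<bar>) integrable_on {a..b}" using f by (simp add: absolutely_integrable_on_def)
  have cF: "continuous_on {a..b} F"
  proof (rule continuous_on_eq)
    show "continuous_on {a..b} (\<lambda>t. F a + integral {a..t} f)"
      by (intro continuous_on_add continuous_on_const indefinite_integral_continuous_1 fi)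
  qed (metis F)
  show P: "(\<lambda>t. F t * f t) absolutely_integrable_on {a..b}"
  proof (rule absolutely_integrable_bounded_measurable_product_real[OF _ _ _ f])
    show "F \<in> borel_measurable (lebesgue_on {a..b})"
      by (rule continuous_imp_measurable_on_sets_lebesgue[OF cF]) simp
    show "bounded (F ` {a..b})"
      by (rule compact_imp_bounded[OF compact_continuous_image[OF cF compact_Icc]])
  qed simp
  have Pi: "(\<lambda>t. F t * f t) integrable_on {a..b}" using P by (simp add: absolutely_integrable_on_def)
  define D where "D = (F b)^2 - (F a)^2 - 2 * integral {a..b} (\<lambda>t. F t * f t)"
  define I where "I = integral {a..b} (\<lambda>s. \<bar>f s\<bar>)"
  have I0: "I \<ge> 0" unfolding I_def by (rule integral_nonneg[OF fa]) simp
  have key: "\<bar>D\<bar> \<le> 2 * e * I" if e: "e > 0" for e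
  proof -
    have "uniformly_continuous_on {a..b} F"
      by (rule compact_uniformly_continuous[OF cF compact_Icc])
    from this[unfolded uniformly_continuous_on_def, rule_format, OF e] obtain \<delta> where \<delta>: "\<delta> > 0"
      and uc0: "\<forall>x\<in>{a..b}. \<forall>x'\<in>{a..b}. dist x' x < \<delta> \<longrightarrow> dist (F x') (F x) < e"
      by blast
    have uc: "dist (F x') (F x) < e" if "x \<in> {a..b}" "x' \<in> {a..b}" "dist x' x < \<delta>" for x x'
      using uc0 that by blast
    obtain m :: nat where m: "(b - a) / \<delta> < real m" using reals_Archimedean2 by blast
    have "0 \<le> (b - a) / \<delta>" using ab \<delta> by simp
    then have mpos: "real m > 0" using m by linarith
    define h where "h = (b - a) / real m"
    have h0: "h \<ge> 0" unfolding h_def using ab mpos by simp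
    have "b - a < real m * \<delta>" using m \<delta> by (simp add: divide_less_eq)
    then have hd: "h < \<delta>" unfolding h_def using mpos by (simp add: divide_less_eq mult.commute)
    define t where "t k = a + real k * h" for k :: nat
    have tm: "t m = b" unfolding t_def h_def using mpos by simp
    have tle: "t k \<le> b" if "k \<le> m" for k
    proof -
      have "real k * h \<le> real m * h" using that h0 by (simp add: mult_right_mono)
      then show ?thesis using tm unfolding t_def by simp
    qed
    have tge: "a \<le> t k" for k unfolding t_def using h0 by simp
    have ind: "k \<le> m \<longrightarrow> \<bar>(F (t k))^2 - (F a)^2 - 2 * integral {a..t k} (\<lambda>t. F t * f t)\<bar>
               \<le> 2 * e * integral {a..t k} (\<lambda>s. \<bar>f s\<bar>)" for k
    proof (induction k)
      case 0
      then show ?case by (simp add: t_def)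
    next
      case (Suc k)
      show ?case
      proof
        assume km: "Suc k \<le> m"
        define c where "c = t k"
        define d where "d = t (Suc k)"
        have dc: "d = c + h" unfolding c_def d_def t_def by (simp add: algebra_simps)
        have ac: "a \<le> c" unfolding c_def by (rule tge)
        have cd: "c \<le> d" using dc h0 by simp
        have db: "d \<le> b" unfolding d_def using km tle by blast
        have sub: "{c..d} \<subseteq> {a..b}" using ac db by auto
        have IH: "\<bar>(F c)^2 - (F a)^2 - 2 * integral {a..c} (\<lambda>t. F t * f t)\<bar>
               \<le> 2 * e * integral {a..c} (\<lambda>s. \<bar>f s\<bar>)" using Suc.IH km unfolding c_def by simp
        have fid: "f integrable_on {a..d}" by (rule integrable_subinterval_real[OF fi]) (use db in auto)
        have fad: "(\<lambda>s. \<bar>f s\<bar>) integrable_on {a..d}" by (rule integrable_subinterval_real[OF fa]) (use db in auto)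
        have Pid: "(\<lambda>t. F t * f t) integrable_on {a..d}" by (rule integrable_subinterval_real[OF Pi]) (use db in auto)
        have c1: "integral {a..c} f + integral {c..d} f = integral {a..d} f"
          by (rule Henstock_Kurzweil_Integration.integral_combine[OF ac cd fid])
        have c2: "integral {a..c} (\<lambda>s. \<bar>f s\<bar>) + integral {c..d} (\<lambda>s. \<bar>f s\<bar>) = integral {a..d} (\<lambda>s. \<bar>f s\<bar>)"
          by (rule Henstock_Kurzweil_Integration.integral_combine[OF ac cd fad])
        have c3: "integral {a..c} (\<lambda>t. F t * f t) + integral {c..d} (\<lambda>t. F t * f t) = integral {a..d} (\<lambda>t. F t * f t)"
          by (rule Henstock_Kurzweil_Integration.integral_combine[OF ac cd Pid])
        have Fc': "F c = F a + integral {a..c} f" using ac cd db by (intro F) auto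
        have Fd': "F d = F a + integral {a..d} f" using ac cd db by (intro F) auto
        have Fd: "F d = F c + integral {c..d} f"
          using Fc' Fd' c1 by linarith
        have loc: "\<bar>(F d)^2 - (F c)^2 - 2 * integral {c..d} (\<lambda>s. F s * f s)\<bar>
          \<le> 2 * e * integral {c..d} (\<lambda>s. \<bar>f s\<bar>)"
        proof (rule sq_local[OF cd _ _ Fd])
          show "f absolutely_integrable_on {c..d}" by (rule absolutely_integrable_on_subinterval[OF f sub])
          show "(\<lambda>s. F s * f s) integrable_on {c..d}" by (rule integrable_subinterval_real[OF Pi sub])
          fix s assume s: "s \<in> {c..d}"
          have s1: "\<bar>F d - F s\<bar> < e"
            using uc[of s d] s sub dc hd by (auto simp: dist_real_def)
          have s2: "\<bar>F c - F s\<bar> < e"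
            using uc[of s c] s sub dc hd by (auto simp: dist_real_def)
          show "\<bar>F d + F c - 2 * F s\<bar> \<le> 2 * e" using s1 s2 by linarith
        qed
        show "\<bar>(F (t (Suc k)))^2 - (F a)^2 - 2 * integral {a..t (Suc k)} (\<lambda>t. F t * f t)\<bar>
               \<le> 2 * e * integral {a..t (Suc k)} (\<lambda>s. \<bar>f s\<bar>)"
        proof -
          have eq1: "(F d)^2 - (F a)^2 - 2 * integral {a..d} (\<lambda>t. F t * f t)
             = ((F c)^2 - (F a)^2 - 2 * integral {a..c} (\<lambda>t. F t * f t))
              + ((F d)^2 - (F c)^2 - 2 * integral {c..d} (\<lambda>t. F t * f t))"
            using c3 by (simp add: algebra_simps)
          have eq2: "2 * e * integral {a..d} (\<lambda>s. \<bar>f s\<bar>)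
             = 2 * e * integral {a..c} (\<lambda>s. \<bar>f s\<bar>) + 2 * e * integral {c..d} (\<lambda>s. \<bar>f s\<bar>)"
            using c2[symmetric] by (simp add: distrib_left)
          have "\<bar>(F d)^2 - (F a)^2 - 2 * integral {a..d} (\<lambda>t. F t * f t)\<bar>
               \<le> 2 * e * integral {a..d} (\<lambda>s. \<bar>f s\<bar>)"
            unfolding eq1 eq2 using IH loc abs_triangle_ineq by (smt (verit))
          then show ?thesis unfolding d_def .
        qed
      qed
    qed
    from ind[of m] show ?thesis unfolding D_def I_def tm by simp
  qed
  have "D = 0"
  proof (rule ccontr)
    assume "D \<noteq> 0"
    define e where "e = \<bar>D\<bar> / (4 * (I + 1))"
    have e0: "e > 0" unfolding e_def using \<open>D \<noteq> 0\<close> I0 by simp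
    have "2 * e * I < \<bar>D\<bar>"
    proof -
      have "2 * e * I = \<bar>D\<bar> * (I / (2 * (I + 1)))" unfolding e_def using I0 by (simp add: field_simps)
      also have "\<dots> < \<bar>D\<bar> * 1"
        using \<open>D \<noteq> 0\<close> I0 by (intro mult_strict_left_mono) (auto simp: field_simps)
      finally show ?thesis by simp
    qed
    then show False using key[OF e0] by simp
  qed
  then show "(F b)^2 - (F a)^2 = 2 * integral {a..b} (\<lambda>t. F t * f t)" unfolding D_def by simp
qed

lemma sum_UNIV_pair: "(\<Sum>j\<in>(UNIV::('a::finite \<times> 'b::finite) set). g j) = (\<Sum>i\<in>UNIV. \<Sum>k\<in>UNIV. g (i,k))"
  by (subst UNIV_Times_UNIV[symmetric]) (simp add: sum.cartesian_product)

lemma kronBT_apply: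
  assumes "etl e \<noteq> ehd e"
  shows "(kron (transpose (incidence etl ehd)) (mat 1) *v x) $ (e,k) = x $ (ehd e, k) - x $ (etl e, k)"
proof -
  have "(kron (transpose (incidence etl ehd)) (mat 1) *v x) $ (e,k)
      = (\<Sum>i\<in>UNIV. \<Sum>k'\<in>UNIV. (if ehd e = i then 1 else if etl e = i then -1 else 0) * (if k = k' then 1 else 0) * x $ (i,k'))"
    unfolding matrix_vector_mult_def kron_def transpose_def incidence_def mat_def sum_UNIV_pair
    by (simp only: vec_lambda_beta fst_conv snd_conv)
  also have "\<dots> = (\<Sum>i\<in>UNIV. (if ehd e = i then 1 else if etl e = i then -1 else 0) * x $ (i,k))"
  proof (rule sum.cong[OF refl])
    fix i
    let ?c = "(if ehd e = i then 1 else if etl e = i then -1 else 0) :: real"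
    have "(\<Sum>k'\<in>UNIV. ?c * (if k = k' then 1 else 0) * x $ (i,k')) = (\<Sum>k'\<in>UNIV. if k' = k then ?c * x $ (i,k) else 0)"
      by (rule sum.cong) auto
    then show "(\<Sum>k'\<in>UNIV. ?c * (if k = k' then 1 else 0) * x $ (i,k')) = ?c * x $ (i,k)" by simp
  qed
  also have "\<dots> = (\<Sum>i\<in>UNIV. (if i = ehd e then x $ (i,k) else 0)) - (\<Sum>i\<in>UNIV. (if i = etl e then x $ (i,k) else 0))"
    unfolding sum_subtractf[symmetric] proof (rule sum.cong[OF refl])
    fix i show "(if ehd e = i then 1 else if etl e = i then -1 else 0) * x $ (i,k) = (if i = ehd e then x $ (i,k) else 0) - (if i = etl e then x $ (i,k) else 0)"
      using assms by (cases "i = ehd e"; cases "i = etl e") auto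
  qed
  also have "\<dots> = x $ (ehd e, k) - x $ (etl e, k)" by simp
  finally show ?thesis .
qed

lemma diagm_apply: "(diagm q *v s) $ j = q $ j * s $ j"
proof -
  have "(diagm q *v s) $ j = (\<Sum>ja\<in>UNIV. if ja = j then q $ j * s $ j else 0)"
    unfolding matrix_vector_mult_def diagm_def by (simp only: vec_lambda_beta) (rule sum.cong[OF refl], simp)
  then show ?thesis by simp
qed

lemma vkron_ones_apply: "vkron ones p $ (i,k) = p $ k"
  by (simp add: vkron_def ones_def)

lemma phibar_apply: "phibar (y::real^('n::finite\<times>'r::finite)) $ k = (\<Sum>j\<in>UNIV. y $ (j,k)) / real CARD('n)"
  by (simp add: phibar_def)

lemma transpose_kron_mat1: "transpose (kron B (mat 1 :: real^'r::finite^'r)) = kron (transpose B) (mat 1)"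
  unfolding vec_eq_iff transpose_def kron_def mat_def by auto

lemma inner_kron: "inner x (kron B (mat 1) *v q) = inner (kron (transpose B) (mat 1) *v x) q"
proof -
  have "inner x (kron B (mat 1) *v q) = inner (x v* kron B (mat 1)) q" by (rule dot_lmul_matrix[symmetric])
  also have "x v* kron B (mat 1) = transpose (kron B (mat 1)) *v x"
    by (simp add: vec_eq_iff vector_matrix_mult_def matrix_vector_mult_def transpose_def mult.commute)
  finally show ?thesis by (simp add: transpose_kron_mat1)
qed

lemma inner_vec_sum: "inner (x::real^'a::finite) y = (\<Sum>i\<in>UNIV. x $ i * y $ i)"
  by (simp add: inner_vec_def)

definition acf :: "(real \<Rightarrow> real) \<Rightarrow> (real \<Rightarrow> real) \<Rightarrow> real \<Rightarrow> bool" where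
  "acf F f t0 \<longleftrightarrow> (\<forall>T\<ge>t0. f absolutely_integrable_on {t0..T}) \<and> (\<forall>t\<ge>t0. F t = F t0 + integral {t0..t} f)"

lemma acf_int: "acf F f t0 \<Longrightarrow> t0 \<le> a \<Longrightarrow> f absolutely_integrable_on {a..b}"
  unfolding acf_def
  by (metis absolutely_integrable_on_subinterval atLeastatMost_subset_iff dual_order.refl max.cobounded1 max.cobounded2)

lemma acf_diff:
  assumes "acf F f t0" "t0 \<le> a" "a \<le> b"
  shows "F b - F a = integral {a..b} f"
proof -
  have fi: "f integrable_on {t0..b}" using assms unfolding acf_def absolutely_integrable_on_def by auto
  have "integral {t0..a} f + integral {a..b} f = integral {t0..b} f"
    by (rule Henstock_Kurzweil_Integration.integral_combine[OF assms(2,3) fi])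
  moreover have "F a = F t0 + integral {t0..a} f" "F b = F t0 + integral {t0..b} f"
    using assms unfolding acf_def by (meson order_trans)+
  ultimately show ?thesis by linarith
qed

lemma acf_sq:
  assumes "acf F f t0" "t0 \<le> a" "a \<le> b"
  shows "(\<lambda>t. F t * f t) absolutely_integrable_on {a..b}"
    and "(F b)^2 - (F a)^2 = 2 * integral {a..b} (\<lambda>t. F t * f t)"
proof -
  have f: "f absolutely_integrable_on {a..b}" by (rule acf_int[OF assms(1,2)])
  have F: "F t = F a + integral {a..t} f" if "t \<in> {a..b}" for t
    using acf_diff[OF assms(1,2), of t] that by auto
  show "(\<lambda>t. F t * f t) absolutely_integrable_on {a..b}"
    by (rule sq_ftc(1)[OF assms(3) f F]) 
  show "(F b)^2 - (F a)^2 = 2 * integral {a..b} (\<lambda>t. F t * f t)"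
    by (rule sq_ftc(2)[OF assms(3) f F])
qed

lemma acf_add:
  assumes "acf F f t0" "acf G g t0"
  shows "acf (\<lambda>t. F t + G t) (\<lambda>t. f t + g t) t0"
  unfolding acf_def
proof safe
  fix T assume "t0 \<le> T"
  then show "(\<lambda>t. f t + g t) absolutely_integrable_on {t0..T}"
    using assms unfolding acf_def by (intro set_integral_add(1)) auto
next
  fix t assume t: "t0 \<le> t"
  have "f integrable_on {t0..t}" "g integrable_on {t0..t}"
    using assms t unfolding acf_def absolutely_integrable_on_def by auto
  then have "integral {t0..t} (\<lambda>t. f t + g t) = integral {t0..t} f + integral {t0..t} g"
    by (rule integral_add)
  moreover have "F t = F t0 + integral {t0..t} f" "G t = G t0 + integral {t0..t} g"
    using assms t unfolding acf_def by blast+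
  ultimately show "F t + G t = F t0 + G t0 + integral {t0..t} (\<lambda>t. f t + g t)"
    by linarith
qed

lemma acf_minus_const: "acf F f t0 \<Longrightarrow> acf (\<lambda>t. F t - c) f t0"
  unfolding acf_def by (metis (no_types, lifting) diff_add_eq)

lemma acf_cont:
  assumes "acf F f t0" "t0 \<le> a"
  shows "continuous_on {a..b} F"
proof (cases "a \<le> b")
  case True
  have fi: "f integrable_on {a..b}" using acf_int[OF assms] by (simp add: absolutely_integrable_on_def)
  show ?thesis
  proof (rule continuous_on_eq)
    show "continuous_on {a..b} (\<lambda>t. F a + integral {a..t} f)"
      by (intro continuous_on_add continuous_on_const indefinite_integral_continuous_1 fi)
    fix t assume "t \<in> {a..b}"
    then show "F a + integral {a..t} f = F t" using acf_diff[OF assms, of t] by auto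
  qed
qed simp

lemma integral_le_ae:
  fixes f g :: "real \<Rightarrow> real"
  assumes N: "negligible N" and f: "f integrable_on S" and g: "g integrable_on S"
    and le: "\<And>s. s \<in> S \<Longrightarrow> s \<notin> N \<Longrightarrow> f s \<le> g s"
  shows "integral S f \<le> integral S g"
proof -
  define f2 where "f2 s = (if s \<in> N then g s else f s)" for s
  have eq: "integral S f2 = integral S f"
    by (rule integral_spike[OF N]) (auto simp: f2_def)
  have f2: "f2 integrable_on S"
    by (rule integrable_spike[OF f N]) (auto simp: f2_def)
  have "integral S f2 \<le> integral S g"
    by (rule integral_le[OF f2 g]) (use le in \<open>auto simp: f2_def\<close>)
  then show ?thesis using eq by simp
qed

lemma filippov_halfspace:
  fixes ff :: "real \<Rightarrow> 'a::euclidean_space \<Rightarrow> 'a"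
  assumes xi: "\<xi> \<in> filippov_set ff t x"
    and H: "\<And>\<epsilon>. \<epsilon> > 0 \<Longrightarrow> \<exists>\<delta>>0. \<forall>x'\<in>ball x \<delta>. inner a (ff t x') \<le> \<beta> + \<epsilon>"
  shows "inner a \<xi> \<le> \<beta>"
proof (rule field_le_epsilon)
  fix \<epsilon> :: real assume e: "\<epsilon> > 0"
  obtain \<delta> where d: "\<delta> > 0" and Hd: "\<forall>x'\<in>ball x \<delta>. inner a (ff t x') \<le> \<beta> + \<epsilon>"
    using H[OF e] by blast
  have "{} \<in> null_sets lebesgue" by simp
  then have mem: "\<xi> \<in> closure (convex hull (ff t ` (ball x \<delta> - {})))"
    using xi d unfolding filippov_set_def by blast
  have "closure (convex hull (ff t ` (ball x \<delta> - {}))) \<subseteq> {y. inner a y \<le> \<beta> + \<epsilon>}"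
    by (intro closure_minimal hull_minimal closed_halfspace_le convex_halfspace_le) (use Hd in auto)
  then show "inner a \<xi> \<le> \<beta> + \<epsilon>" using mem by blast
qed

lemma path_bound:
  fixes etl ehd :: "'e::finite \<Rightarrow> 'n::finite"
  assumes A1: "undirected_connected etl ehd"
  obtains Kc :: real where "Kc \<ge> 0"
    "\<And>p i j. \<bar>p i - p j\<bar> \<le> Kc * (\<Sum>e\<in>UNIV. \<bar>p (ehd e) - p (etl e)\<bar>)"
proof -
  define R where "R = range (\<lambda>e. (etl e, ehd e))"
  have conn: "(i, j) \<in> R\<^sup>*" for i j using A1 unfolding undirected_connected_def R_def by blast
  have step: "(i, j) \<in> R ^^ n \<Longrightarrow> \<bar>p i - p j\<bar> \<le> real n * (\<Sum>e\<in>UNIV. \<bar>p (ehd e) - p (etl e)\<bar>)"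
    for p :: "'n \<Rightarrow> real" and i j n
  proof (induction n arbitrary: j)
    case 0
    then show ?case by simp
  next
    case (Suc n)
    from Suc.prems obtain m where im: "(i, m) \<in> R ^^ n" and mj: "(m, j) \<in> R" by auto
    from mj obtain e where me: "m = etl e" "j = ehd e" unfolding R_def by auto
    have "\<bar>p m - p j\<bar> \<le> (\<Sum>e\<in>UNIV. \<bar>p (ehd e) - p (etl e)\<bar>)"
      unfolding me abs_minus_commute[of "p (etl e)"] by (rule member_le_sum) auto
    then show ?case using Suc.IH[OF im] by (simp add: algebra_simps)
  qed
  define nn where "nn i j = (SOME n. (i, j) \<in> R ^^ n)" for i j
  have nn: "(i, j) \<in> R ^^ nn i j" for i j
    unfolding nn_def by (rule someI_ex) (use conn rtrancl_power in blast)
  define Kc where "Kc = (\<Sum>i\<in>UNIV. \<Sum>j\<in>UNIV. real (nn i j))"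
  have Kc0: "Kc \<ge> 0" unfolding Kc_def by (intro sum_nonneg) auto
  have nK: "real (nn i j) \<le> Kc" for i j
  proof -
    have "real (nn i j) \<le> (\<Sum>j\<in>UNIV. real (nn i j))" by (rule member_le_sum) auto
    also have "\<dots> \<le> Kc" unfolding Kc_def by (rule member_le_sum[of i UNIV "\<lambda>i. \<Sum>j\<in>UNIV. real (nn i j)"]) (auto intro: sum_nonneg)
    finally show ?thesis .
  qed
  show ?thesis
  proof (rule that[OF Kc0])
    fix p :: "'n \<Rightarrow> real" and i j
    have S0: "(\<Sum>e\<in>UNIV. \<bar>p (ehd e) - p (etl e)\<bar>) \<ge> 0" by (intro sum_nonneg) auto
    have "\<bar>p i - p j\<bar> \<le> real (nn i j) * (\<Sum>e\<in>UNIV. \<bar>p (ehd e) - p (etl e)\<bar>)" by (rule step[OF nn])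
    also have "\<dots> \<le> Kc * (\<Sum>e\<in>UNIV. \<bar>p (ehd e) - p (etl e)\<bar>)" by (rule mult_right_mono[OF nK S0])
    finally show "\<bar>p i - p j\<bar> \<le> Kc * (\<Sum>e\<in>UNIV. \<bar>p (ehd e) - p (etl e)\<bar>)" .
  qed
qed

lemma mono_lim:
  fixes g :: "real \<Rightarrow> real"
  assumes mono: "\<And>a b. t0 \<le> a \<Longrightarrow> a \<le> b \<Longrightarrow> g a \<le> g b" and bnd: "\<And>t. t0 \<le> t \<Longrightarrow> g t \<le> M"
  shows "\<exists>L. (g \<longlongrightarrow> L) at_top"
proof -
  define L where "L = Sup (g ` {t0..})"
  have bdd: "bdd_above (g ` {t0..})" using bnd by (auto intro!: bdd_aboveI)
  have ne: "g ` {t0..} \<noteq> {}" by auto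
  have up: "g t \<le> L" if "t0 \<le> t" for t unfolding L_def by (rule cSup_upper) (use that bdd in auto)
  have "(g \<longlongrightarrow> L) at_top"
  proof (rule order_tendstoI)
    fix a assume "a < L"
    then obtain t where t: "t \<ge> t0" "a < g t" unfolding L_def using less_cSup_iff[OF ne bdd] by auto
    show "eventually (\<lambda>x. a < g x) at_top"
      unfolding eventually_at_top_linorder using t mono by (meson order_less_le_trans)
  next
    fix a assume "L < a"
    show "eventually (\<lambda>x. g x < a) at_top"
      unfolding eventually_at_top_linorder using up \<open>L < a\<close> by (meson order_le_less_trans)
  qed
  then show ?thesis by blast
qed

lemma psi_lin: "bounded_linear (\<lambda>y::real^('n::finite\<times>'r::finite). y $ (i,k) - (\<Sum>j\<in>UNIV. y $ (j,k)) / real CARD('n))"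
  unfolding linear_conv_bounded_linear[symmetric]
proof (rule linearI)
  fix x y :: "real^('n\<times>'r)"
  show "(x + y) $ (i, k) - (\<Sum>j\<in>UNIV. (x + y) $ (j, k)) / real CARD('n) =
        x $ (i, k) - (\<Sum>j\<in>UNIV. x $ (j, k)) / real CARD('n) + (y $ (i, k) - (\<Sum>j\<in>UNIV. y $ (j, k)) / real CARD('n))"
    by (simp add: sum.distrib add_divide_distrib)
next
  fix c :: real and x :: "real^('n\<times>'r)"
  show "(c *\<^sub>R x) $ (i, k) - (\<Sum>j\<in>UNIV. (c *\<^sub>R x) $ (j, k)) / real CARD('n) =
        c *\<^sub>R (x $ (i, k) - (\<Sum>j\<in>UNIV. x $ (j, k)) / real CARD('n))"
    by (simp add: sum_distrib_left[symmetric] right_diff_distrib)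
qed

lemma psi_sum0:
  fixes y :: "real^('n::finite\<times>'r::finite)"
  shows "(\<Sum>i\<in>UNIV. (y $ (i,k) - (\<Sum>j\<in>UNIV. y $ (j,k)) / real CARD('n))) = 0"
proof -
  have "(\<Sum>i\<in>(UNIV::'n set). (y $ (i,k) - (\<Sum>j\<in>UNIV. y $ (j,k)) / real CARD('n)))
      = (\<Sum>i\<in>UNIV. y $ (i,k)) - real CARD('n) * ((\<Sum>j\<in>UNIV. y $ (j,k)) / real CARD('n))"
    by (simp only: sum_subtractf sum_constant)
  also have "\<dots> = 0" by simp
  finally show ?thesis .
qed

lemma psi_bound:
  fixes etl ehd :: "'e::finite \<Rightarrow> 'n::finite" and y :: "real^('n\<times>'r::finite)"
  assumes Kc: "\<And>p::'n\<Rightarrow>real. \<And>i j. \<bar>p i - p j\<bar> \<le> Kc * (\<Sum>e\<in>UNIV. \<bar>p (ehd e) - p (etl e)\<bar>)"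
    and Bd: "\<And>e. \<bar>y $ (ehd e,k) - y $ (etl e,k)\<bar> \<le> Bd" and K0: "Kc \<ge> 0"
  shows "\<bar>y $ (i,k) - (\<Sum>j\<in>UNIV. y $ (j,k)) / real CARD('n)\<bar> \<le> Kc * (real CARD('e) * Bd)"
proof -
  define N where "N = real CARD('n)"
  have N0: "N > 0" unfolding N_def by simp
  define SE where "SE = (\<Sum>e\<in>UNIV. \<bar>y $ (ehd e,k) - y $ (etl e,k)\<bar>)"
  have SEB: "SE \<le> real CARD('e) * Bd"
  proof -
    have "SE \<le> (\<Sum>e\<in>(UNIV::'e set). Bd)" unfolding SE_def by (rule sum_mono) (rule Bd)
    then show ?thesis by simp
  qed
  have eq: "y $ (i,k) - (\<Sum>j\<in>UNIV. y $ (j,k)) / N = (\<Sum>j\<in>UNIV. (y $ (i,k) - y $ (j,k))) / N"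
  proof -
    have "(\<Sum>j\<in>UNIV. (y $ (i,k) - y $ (j,k))) = N * y $ (i,k) - (\<Sum>j\<in>UNIV. y $ (j,k))"
      unfolding N_def by (simp only: sum_subtractf sum_constant)
    then show ?thesis using N0 by (simp add: diff_divide_distrib)
  qed
  have "\<bar>(\<Sum>j\<in>UNIV. (y $ (i,k) - y $ (j,k)))\<bar> \<le> (\<Sum>j\<in>(UNIV::'n set). Kc * SE)"
  proof -
    have "\<bar>(\<Sum>j\<in>UNIV. (y $ (i,k) - y $ (j,k)))\<bar> \<le> (\<Sum>j\<in>UNIV. \<bar>y $ (i,k) - y $ (j,k)\<bar>)"
      by (rule sum_abs)
    also have "\<dots> \<le> (\<Sum>j\<in>(UNIV::'n set). Kc * SE)"
      by (rule sum_mono) (unfold SE_def, rule Kc[of "\<lambda>i. y $ (i,k)"])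
    finally show ?thesis .
  qed
  also have "\<dots> = N * (Kc * SE)" unfolding N_def by simp
  finally have A: "\<bar>(\<Sum>j\<in>UNIV. (y $ (i,k) - y $ (j,k)))\<bar> \<le> N * (Kc * SE)" .
  have A2: "\<bar>(\<Sum>j\<in>UNIV. (y $ (i,k) - y $ (j,k)))\<bar> / N \<le> Kc * SE"
    by (subst pos_divide_le_eq[OF N0]) (use A in \<open>simp add: mult_ac\<close>)
  have A3: "\<bar>(\<Sum>j\<in>UNIV. (y $ (i,k) - y $ (j,k))) / N\<bar> = \<bar>(\<Sum>j\<in>UNIV. (y $ (i,k) - y $ (j,k)))\<bar> / N"
    using N0 by (simp add: abs_divide)
  have "\<bar>y $ (i,k) - (\<Sum>j\<in>UNIV. y $ (j,k)) / N\<bar> \<le> Kc * SE"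
    unfolding eq A3 by (rule A2)
  also have "\<dots> \<le> Kc * (real CARD('e) * Bd)" using SEB K0 by (rule mult_left_mono)
  finally show ?thesis unfolding N_def .
qed

lemma cross_bound:
  fixes etl ehd :: "'e::finite \<Rightarrow> 'n::finite" and X d :: "real^('n\<times>'r::finite)"
  assumes d0: "\<And>k. (\<Sum>i\<in>UNIV. d $ (i,k)) = 0" and dB: "\<And>i k. \<bar>d $ (i,k)\<bar> \<le> Dc"
    and Kc: "\<And>p::'n\<Rightarrow>real. \<And>i j. \<bar>p i - p j\<bar> \<le> Kc * (\<Sum>e\<in>UNIV. \<bar>p (ehd e) - p (etl e)\<bar>)"
    and K0: "Kc \<ge> 0"
  shows "inner X d \<le> real CARD('n) * Kc * Dc * (\<Sum>k\<in>UNIV. \<Sum>e\<in>UNIV. \<bar>X $ (ehd e,k) - X $ (etl e,k)\<bar>)"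
proof -
  obtain i0 :: 'n where True by blast
  have D0: "Dc \<ge> 0" using dB[of i0] abs_ge_zero order_trans by blast
  define S where "S k = (\<Sum>e\<in>UNIV. \<bar>X $ (ehd e,k) - X $ (etl e,k)\<bar>)" for k
  have S0: "S k \<ge> 0" for k unfolding S_def by (intro sum_nonneg) auto
  have inner_eq: "inner X d = (\<Sum>k\<in>UNIV. \<Sum>i\<in>UNIV. X $ (i,k) * d $ (i,k))"
    unfolding inner_vec_sum sum_UNIV_pair by (rule sum.swap)
  have per_k: "(\<Sum>i\<in>UNIV. X $ (i,k) * d $ (i,k)) \<le> real CARD('n) * Kc * Dc * S k" for k
  proof -
    have "(\<Sum>i\<in>UNIV. X $ (i,k) * d $ (i,k)) = (\<Sum>i\<in>UNIV. (X $ (i,k) - X $ (i0,k)) * d $ (i,k))"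
    proof -
      have "(\<Sum>i\<in>UNIV. X $ (i0,k) * d $ (i,k)) = 0"
        by (simp only: sum_distrib_left[symmetric] d0 mult_zero_right)
      then show ?thesis by (simp only: left_diff_distrib sum_subtractf diff_zero)
    qed
    also have "\<dots> \<le> (\<Sum>i\<in>(UNIV::'n set). Kc * S k * Dc)"
    proof (rule sum_mono)
      fix i :: 'n
      have "(X $ (i,k) - X $ (i0,k)) * d $ (i,k) \<le> \<bar>X $ (i,k) - X $ (i0,k)\<bar> * \<bar>d $ (i,k)\<bar>"
        by (metis abs_ge_self abs_mult)
      also have "\<dots> \<le> (Kc * S k) * Dc"
        using Kc[of "\<lambda>i. X $ (i,k)" i i0] dB[of i k] unfolding S_def
        by (intro mult_mono) auto
      finally show "(X $ (i,k) - X $ (i0,k)) * d $ (i,k) \<le> Kc * S k * Dc" .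
    qed
    also have "\<dots> = real CARD('n) * Kc * Dc * S k" by simp
    finally show ?thesis .
  qed
  have "inner X d \<le> (\<Sum>k\<in>UNIV. real CARD('n) * Kc * Dc * S k)"
    unfolding inner_eq by (rule sum_mono) (rule per_k)
  also have "\<dots> = real CARD('n) * Kc * Dc * (\<Sum>k\<in>UNIV. S k)" by (simp add: sum_distrib_left)
  finally show ?thesis unfolding S_def .
qed

lemma mult_sgn_self: "(x::real) * sgn x = \<bar>x\<bar>"
  by (cases rule: linorder_cases[of x 0]) auto

theorem theorem1:
  fixes etl ehd :: "'e::finite \<Rightarrow> 'n::finite"
    and phi phi' :: "real \<Rightarrow> real^('n \<times> 'r::finite)"
    and \<gamma> t0 \<phi>b \<phi>db :: real
    and z0 :: "real^('n \<times> 'r)"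
    and w :: "real \<Rightarrow> (real^('n \<times> 'r)) \<times> (real^('e \<times> 'r))"
  assumes A1: "undirected_connected etl ehd"
    and A2_diff: "\<forall>t\<ge>0. (phi has_vector_derivative phi' t) (at t within {0..})"
    and A2_cont: "continuous_on {0..} phi'"
    and A2_bnd: "\<forall>t\<ge>0. infnorm (kron (transpose (incidence etl ehd)) (mat 1) *v phi t) \<le> \<phi>b"
    and A2_dbnd: "\<forall>t\<ge>0. infnorm (kron (transpose (incidence etl ehd)) (mat 1) *v phi' t) \<le> \<phi>db"
    and gamma_pos: "\<gamma> > 0"
    and t0_nonneg: "t0 \<ge> 0"
    and sol: "filippov_solution (estimator_field etl ehd \<gamma> phi) t0 w"
    and init_z: "fst (w t0) = z0"
    and init_kappa: "\<forall>j. snd (w t0) $ j \<ge> 1"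
  shows "((\<lambda>t. fst (w t) + phi t - vkron ones (phibar (phi t))) \<longlongrightarrow> 0) at_top"
proof -
  obtain v where vint: "\<forall>T\<ge>t0. v absolutely_integrable_on {t0..T}"
    and wv: "\<forall>t\<ge>t0. w t = w t0 + integral {t0..t} v"
    and vae: "AE t in lebesgue. t \<ge> t0 \<longrightarrow> v t \<in> filippov_set (estimator_field etl ehd \<gamma> phi) t (w t)"
    using sol unfolding filippov_solution_def by blast
  obtain N where N: "negligible N"
    and vN: "\<And>t. t \<notin> N \<Longrightarrow> t \<ge> t0 \<Longrightarrow> v t \<in> filippov_set (estimator_field etl ehd \<gamma> phi) t (w t)"
    using vae unfolding eventually_ae_filter_negligible by blast
  define KT where "KT = kron (transpose (incidence etl ehd)) (mat 1 :: real^'r^'r)"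
  have ne: "etl e \<noteq> ehd e" for e using A1 unfolding undirected_connected_def by blast
  have KTa: "(KT *v x) $ (e,k) = x $ (ehd e, k) - x $ (etl e, k)" for x e k
    unfolding KT_def by (rule kronBT_apply[of etl e ehd, OF ne])
  obtain Kc where Kc0: "Kc \<ge> 0"
    and Kc: "\<And>p::'n\<Rightarrow>real. \<And>i j. \<bar>p i - p j\<bar> \<le> Kc * (\<Sum>e\<in>UNIV. \<bar>p (ehd e) - p (etl e)\<bar>)"
    using path_bound[OF A1] by blast
  define NN where "NN = real CARD('n)"
  define \<psi> where "\<psi> y = y - vkron ones (phibar y)" for y :: "real^('n\<times>'r)"
  have \<psi>a: "\<psi> y $ (i,k) = y $ (i,k) - (\<Sum>j\<in>UNIV. y $ (j,k)) / real CARD('n)" for y i k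
    by (simp add: \<psi>_def vkron_ones_apply phibar_apply)
  have \<psi>lin: "bounded_linear (\<lambda>y. \<psi> y $ c)" for c
  proof -
    obtain i k where c: "c = (i,k)" by (cases c)
    show ?thesis unfolding c \<psi>a by (rule psi_lin)
  qed
  define X where "X t = fst (w t) + phi t - vkron ones (phibar (phi t))" for t
  have X\<psi>: "X t = fst (w t) + \<psi> (phi t)" for t unfolding X_def \<psi>_def by (simp add: algebra_simps)
  define Dc where "Dc = Kc * (real CARD('e) * (\<gamma> * \<phi>b + \<phi>db))"
  define \<kappa>s where "\<kappa>s = NN * Kc * Dc"
  define g where "g c s = fst (v s) $ c + \<psi> (phi' s) $ c" for c s
  define P where "P t = (\<Sum>c\<in>UNIV. (X t $ c)^2)" for t
  define Q where "Q t = (\<Sum>j\<in>UNIV. (snd (w t) $ j - \<kappa>s)^2)" for t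
  define E where "E t = P t / 2 + Q t / 2" for t
  define hh where "hh s = (\<Sum>c\<in>UNIV. X s $ c * g c s) + (\<Sum>j\<in>UNIV. (snd (w s) $ j - \<kappa>s) * snd (v s) $ j)" for s

  have vi: "v integrable_on {t0..T}" if "T \<ge> t0" for T
    using vint that by (simp add: absolutely_integrable_on_def)
  have acfZ: "acf (\<lambda>t. fst (w t) $ c) (\<lambda>s. fst (v s) $ c) t0" for c
  proof -
    have bl: "bounded_linear (\<lambda>p::(real^('n\<times>'r))\<times>(real^('e\<times>'r)). fst p $ c)"
      by (rule bounded_linear_compose[OF bounded_linear_vec_nth bounded_linear_fst])
    show ?thesis unfolding acf_def
    proof safe
      fix T assume "t0 \<le> T"
      then have "((\<lambda>p. fst p $ c) \<circ> v) absolutely_integrable_on {t0..T}"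
        using vint absolutely_integrable_linear[OF _ bl] by blast
      then show "(\<lambda>s. fst (v s) $ c) absolutely_integrable_on {t0..T}" by (simp add: o_def)
    next
      fix t assume t: "t0 \<le> t"
      have "integral {t0..t} ((\<lambda>p. fst p $ c) \<circ> v) = fst (integral {t0..t} v) $ c"
        by (rule integral_linear[OF vi[OF t] bl])
      moreover have "w t = w t0 + integral {t0..t} v" using wv t by blast
      ultimately show "fst (w t) $ c = fst (w t0) $ c + integral {t0..t} (\<lambda>s. fst (v s) $ c)"
        by (simp add: o_def)
    qed
  qed
  have acfK0: "acf (\<lambda>t. snd (w t) $ j) (\<lambda>s. snd (v s) $ j) t0" for j
  proof -
    have bl: "bounded_linear (\<lambda>p::(real^('n\<times>'r))\<times>(real^('e\<times>'r)). snd p $ j)"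
      by (rule bounded_linear_compose[OF bounded_linear_vec_nth bounded_linear_snd])
    show ?thesis unfolding acf_def
    proof safe
      fix T assume "t0 \<le> T"
      then have "((\<lambda>p. snd p $ j) \<circ> v) absolutely_integrable_on {t0..T}"
        using vint absolutely_integrable_linear[OF _ bl] by blast
      then show "(\<lambda>s. snd (v s) $ j) absolutely_integrable_on {t0..T}" by (simp add: o_def)
    next
      fix t assume t: "t0 \<le> t"
      have "integral {t0..t} ((\<lambda>p. snd p $ j) \<circ> v) = snd (integral {t0..t} v) $ j"
        by (rule integral_linear[OF vi[OF t] bl])
      moreover have "w t = w t0 + integral {t0..t} v" using wv t by blast
      ultimately show "snd (w t) $ j = snd (w t0) $ j + integral {t0..t} (\<lambda>s. snd (v s) $ j)"
        by (simp add: o_def)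
    qed
  qed
  have acfK: "acf (\<lambda>t. snd (w t) $ j - \<kappa>s) (\<lambda>s. snd (v s) $ j) t0" for j
    by (rule acf_minus_const[OF acfK0])
  have acfPsi: "acf (\<lambda>t. \<psi> (phi t) $ c) (\<lambda>s. \<psi> (phi' s) $ c) t0" for c
    unfolding acf_def
  proof safe
    fix T assume T: "t0 \<le> T"
    have "continuous_on {t0..T} phi'" by (rule continuous_on_subset[OF A2_cont]) (use t0_nonneg in auto)
    then have "continuous_on {t0..T} (\<lambda>s. \<psi> (phi' s) $ c)"
      by (intro continuous_on_compose2[OF linear_continuous_on[OF \<psi>lin[of c]]]) auto
    then show "(\<lambda>s. \<psi> (phi' s) $ c) absolutely_integrable_on {t0..T}"
      by (rule absolutely_integrable_continuous_real)
  next
    fix t assume t: "t0 \<le> t"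
    have "(phi' has_integral (phi t - phi t0)) {t0..t}"
    proof (rule fundamental_theorem_of_calculus[OF t])
      fix x assume x: "x \<in> {t0..t}"
      then have "x \<ge> 0" using t0_nonneg by auto
      then have "(phi has_vector_derivative phi' x) (at x within {0..})" using A2_diff by blast
      then show "(phi has_vector_derivative phi' x) (at x within {t0..t})"
        by (rule has_vector_derivative_within_subset) (use t0_nonneg in auto)
    qed
    from has_integral_linear[OF this \<psi>lin[of c]]
    have "((\<lambda>s. \<psi> (phi' s) $ c) has_integral (\<psi> (phi t - phi t0) $ c)) {t0..t}" by (simp add: o_def)
    then have I: "integral {t0..t} (\<lambda>s. \<psi> (phi' s) $ c) = \<psi> (phi t - phi t0) $ c"
      by (rule integral_unique)
    have "\<psi> (phi t - phi t0) $ c = \<psi> (phi t) $ c - \<psi> (phi t0) $ c"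
      by (rule linear_diff[OF bounded_linear.linear[OF \<psi>lin[of c]]])
    then show "\<psi> (phi t) $ c = \<psi> (phi t0) $ c + integral {t0..t} (\<lambda>s. \<psi> (phi' s) $ c)"
      unfolding I by simp
  qed
  have acfX: "acf (\<lambda>t. X t $ c) (g c) t0" for c
  proof -
    have e1: "(\<lambda>t. X t $ c) = (\<lambda>t. fst (w t) $ c + \<psi> (phi t) $ c)" by (simp add: X\<psi>)
    have e2: "g c = (\<lambda>s. fst (v s) $ c + \<psi> (phi' s) $ c)" by (simp add: g_def fun_eq_iff)
    show ?thesis unfolding e1 e2 by (rule acf_add[OF acfZ acfPsi])
  qed
  have energy: "E b - E a = integral {a..b} hh" "hh integrable_on {a..b}" if ab: "t0 \<le> a" "a \<le> b" for a b
  proof -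
    have iX: "(\<lambda>t. X t $ c * g c t) integrable_on {a..b}" for c
      using acf_sq(1)[OF acfX ab] by (simp add: absolutely_integrable_on_def)
    have iK: "(\<lambda>t. (snd (w t) $ j - \<kappa>s) * snd (v t) $ j) integrable_on {a..b}" for j
      using acf_sq(1)[OF acfK ab] by (simp add: absolutely_integrable_on_def)
    have sX: "(\<lambda>t. \<Sum>c\<in>UNIV. X t $ c * g c t) integrable_on {a..b}"
      by (rule integrable_sum) (auto intro: iX)
    have sK: "(\<lambda>t. \<Sum>j\<in>UNIV. (snd (w t) $ j - \<kappa>s) * snd (v t) $ j) integrable_on {a..b}"
      by (rule integrable_sum) (auto intro: iK)
    have hhe: "hh = (\<lambda>t. (\<Sum>c\<in>UNIV. X t $ c * g c t) + (\<Sum>j\<in>UNIV. (snd (w t) $ j - \<kappa>s) * snd (v t) $ j))"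
      by (simp add: hh_def fun_eq_iff)
    show "hh integrable_on {a..b}" unfolding hhe by (rule integrable_add[OF sX sK])
    have "P b - P a = (\<Sum>c\<in>UNIV. (X b $ c)^2 - (X a $ c)^2)" by (simp add: P_def sum_subtractf)
    also have "\<dots> = (\<Sum>c\<in>UNIV. 2 * integral {a..b} (\<lambda>t. X t $ c * g c t))"
      by (rule sum.cong[OF refl]) (rule acf_sq(2)[OF acfX ab])
    also have "\<dots> = 2 * integral {a..b} (\<lambda>t. \<Sum>c\<in>UNIV. X t $ c * g c t)"
      by (simp add: integral_sum iX sum_distrib_left)
    finally have dP: "P b - P a = 2 * integral {a..b} (\<lambda>t. \<Sum>c\<in>UNIV. X t $ c * g c t)" .
    have "Q b - Q a = (\<Sum>j\<in>UNIV. (snd (w b) $ j - \<kappa>s)^2 - (snd (w a) $ j - \<kappa>s)^2)"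
      by (simp add: Q_def sum_subtractf)
    also have "\<dots> = (\<Sum>j\<in>UNIV. 2 * integral {a..b} (\<lambda>t. (snd (w t) $ j - \<kappa>s) * snd (v t) $ j))"
      by (rule sum.cong[OF refl]) (rule acf_sq(2)[OF acfK ab])
    also have "\<dots> = 2 * integral {a..b} (\<lambda>t. \<Sum>j\<in>UNIV. (snd (w t) $ j - \<kappa>s) * snd (v t) $ j)"
      by (simp add: integral_sum iK sum_distrib_left)
    finally have dQ: "Q b - Q a = 2 * integral {a..b} (\<lambda>t. \<Sum>j\<in>UNIV. (snd (w t) $ j - \<kappa>s) * snd (v t) $ j)" .
    have "integral {a..b} hh = integral {a..b} (\<lambda>t. \<Sum>c\<in>UNIV. X t $ c * g c t)
        + integral {a..b} (\<lambda>t. \<Sum>j\<in>UNIV. (snd (w t) $ j - \<kappa>s) * snd (v t) $ j)"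
      unfolding hhe by (rule integral_add[OF sX sK])
    then show "E b - E a = integral {a..b} hh" unfolding E_def using dP dQ by simp
  qed
  have ptw: "hh s \<le> - \<gamma> * P s" if s: "t0 \<le> s" "s \<notin> N" for s
  proof -
    define z where "z = fst (w s)"
    define \<kappa> where "\<kappa> = snd (w s)"
    define xs where "xs = X s"
    define y where "y = KT *v (z + phi s)"
    define Kv where "Kv = (\<chi> j. \<kappa> $ j - \<kappa>s)"
    define \<beta> where "\<beta> = - \<gamma> * inner xs z - \<kappa>s * (\<Sum>j\<in>UNIV. \<bar>y $ j\<bar>)"
    have xsz: "xs = z + \<psi> (phi s)" unfolding xs_def z_def by (rule X\<psi>)
    have KTxs1: "(KT *v xs) $ (e,k) = y $ (e,k)" for e k
      by (simp add: y_def KTa xs_def X_def vkron_ones_apply z_def)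
    have KTxs: "KT *v xs = y"
      unfolding vec_eq_iff split_paired_All using KTxs1 by blast
    have KTxs': "kron (transpose (incidence etl ehd)) (mat 1) *v xs = y"
      using KTxs unfolding KT_def .
    have fil: "inner (xs, Kv) (v s) \<le> \<beta>"
    proof (rule filippov_halfspace[OF vN[OF s(2,1)]])
      fix \<epsilon> :: real assume e: "\<epsilon> > 0"
      define yp where "yp q = KT *v (fst q + phi s)" for q :: "(real^('n\<times>'r))\<times>(real^('e\<times>'r))"
      define G where "G q = - \<gamma> * inner xs (fst q) - (\<Sum>j\<in>UNIV. y $ j * (snd q $ j * sgn (yp q $ j)))
          + (\<Sum>j\<in>UNIV. Kv $ j * \<bar>yp q $ j\<bar>)" for q
      have Geq: "inner (xs, Kv) (estimator_field etl ehd \<gamma> phi s q) = G q" for q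
      proof -
        have u1: "inner xs (kron (incidence etl ehd) (mat 1) *v (diagm (snd q) *v vsgn (yp q)))
            = (\<Sum>j\<in>UNIV. y $ j * (snd q $ j * sgn (yp q $ j)))"
          unfolding inner_kron KTxs' unfolding inner_vec_sum diagm_apply vsgn_def by simp
        have u2: "inner Kv (vabs (yp q)) = (\<Sum>j\<in>UNIV. Kv $ j * \<bar>yp q $ j\<bar>)"
          unfolding inner_vec_sum vabs_def by simp
        have ef: "estimator_field etl ehd \<gamma> phi s q = (- \<gamma> *\<^sub>R fst q + - (kron (incidence etl ehd) (mat 1) *v (diagm (snd q) *v vsgn (yp q))), vabs (yp q))"
          unfolding estimator_field_def Let_def yp_def KT_def by simp
        show ?thesis unfolding ef inner_Pair inner_add_right inner_minus_right inner_scaleR_right u1 u2 G_def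
          by simp
      qed
      have ypp: "yp (w s) = y" unfolding yp_def y_def z_def ..
      have Gp: "G (w s) = \<beta>"
      proof -
        have a: "(\<Sum>j\<in>UNIV. y $ j * (\<kappa> $ j * sgn (y $ j))) = (\<Sum>j\<in>UNIV. \<kappa> $ j * \<bar>y $ j\<bar>)"
        proof (rule sum.cong[OF refl])
          fix j show "y $ j * (\<kappa> $ j * sgn (y $ j)) = \<kappa> $ j * \<bar>y $ j\<bar>"
            using mult_sgn_self[of "y $ j"] by (metis mult.left_commute)
        qed
        have b: "(\<Sum>j\<in>UNIV. Kv $ j * \<bar>y $ j\<bar>) = (\<Sum>j\<in>UNIV. \<kappa> $ j * \<bar>y $ j\<bar>) - \<kappa>s * (\<Sum>j\<in>UNIV. \<bar>y $ j\<bar>)"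
          by (simp add: Kv_def left_diff_distrib sum_subtractf sum_distrib_left)
        show ?thesis unfolding G_def ypp \<beta>_def using a b by (simp add: \<kappa>_def z_def)
      qed
      have ypc: "((\<lambda>q. yp q $ j) \<longlongrightarrow> yp (w s) $ j) (at (w s))" for j
      proof -
        obtain e k where j: "j = (e,k)" by (cases j)
        show ?thesis unfolding j yp_def KTa by (intro tendsto_intros)
      qed
      have lim: "(G \<longlongrightarrow> G (w s)) (at (w s))"
      proof -
        have t1: "((\<lambda>q. - \<gamma> * inner xs (fst q)) \<longlongrightarrow> - \<gamma> * inner xs (fst (w s))) (at (w s))"
          by (intro tendsto_intros)
        have t2: "((\<lambda>q. \<Sum>j\<in>UNIV. y $ j * (snd q $ j * sgn (yp q $ j))) \<longlongrightarrow>
                   (\<Sum>j\<in>UNIV. y $ j * (snd (w s) $ j * sgn (yp (w s) $ j)))) (at (w s))"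
        proof (rule tendsto_sum)
          fix j :: "'e \<times> 'r"
          show "((\<lambda>q. y $ j * (snd q $ j * sgn (yp q $ j))) \<longlongrightarrow> y $ j * (snd (w s) $ j * sgn (yp (w s) $ j))) (at (w s))"
          proof (cases "y $ j = 0")
            case True
            then show ?thesis by simp
          next
            case False
            then have "yp (w s) $ j \<noteq> 0" using ypp by simp
            then show ?thesis
              by (intro tendsto_mult tendsto_const tendsto_sgn ypc tendsto_vec_nth tendsto_snd tendsto_ident_at)
          qed
        qed
        have t3: "((\<lambda>q. \<Sum>j\<in>UNIV. Kv $ j * \<bar>yp q $ j\<bar>) \<longlongrightarrow> (\<Sum>j\<in>UNIV. Kv $ j * \<bar>yp (w s) $ j\<bar>)) (at (w s))"
          by (intro tendsto_sum tendsto_mult tendsto_const tendsto_rabs ypc)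
        have "((\<lambda>q. - \<gamma> * inner xs (fst q) - (\<Sum>j\<in>UNIV. y $ j * (snd q $ j * sgn (yp q $ j)))
          + (\<Sum>j\<in>UNIV. Kv $ j * \<bar>yp q $ j\<bar>)) \<longlongrightarrow> G (w s)) (at (w s))"
          unfolding G_def by (intro tendsto_add tendsto_diff t1 t2 t3)
        then show ?thesis unfolding G_def[abs_def] .
      qed
      have "eventually (\<lambda>q. G q < \<beta> + \<epsilon>) (at (w s))"
        by (rule order_tendstoD(2)[OF lim]) (use Gp e in simp)
      then obtain d where d: "d > 0" and dG: "\<forall>q\<in>UNIV. q \<noteq> w s \<and> dist q (w s) < d \<longrightarrow> G q < \<beta> + \<epsilon>"
        unfolding eventually_at by blast
      show "\<exists>\<delta>>0. \<forall>x'\<in>ball (w s) \<delta>. inner (xs, Kv) (estimator_field etl ehd \<gamma> phi s x') \<le> \<beta> + \<epsilon>"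
      proof (intro exI[of _ d] conjI ballI)
        fix q assume q: "q \<in> ball (w s) d"
        show "inner (xs, Kv) (estimator_field etl ehd \<gamma> phi s q) \<le> \<beta> + \<epsilon>"
        proof (cases "q = w s")
          case True
          then show ?thesis unfolding Geq using Gp e by simp
        next
          case False
          have "dist q (w s) < d" using q by (simp add: dist_commute)
          then have "G q < \<beta> + \<epsilon>" using dG False by blast
          then show ?thesis unfolding Geq by simp
        qed
      qed (rule d)
    qed
    have hh_eq: "hh s = inner (xs, Kv) (v s) + inner xs (\<psi> (phi' s))"
    proof (cases "v s")
      case (Pair a b)
      show ?thesis unfolding hh_def g_def Pair inner_Pair
        by (simp add: inner_vec_sum xs_def Kv_def \<kappa>_def distrib_left sum.distrib algebra_simps)
    qed
    have zx: "z = xs - \<psi> (phi s)" using xsz by simp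
    have ixx: "inner xs xs = P s" by (simp add: P_def xs_def inner_vec_sum power2_eq_square)
    have ixz: "inner xs z = P s - inner xs (\<psi> (phi s))" unfolding zx inner_diff_right ixx ..
    define d where "d = \<gamma> *\<^sub>R \<psi> (phi s) + \<psi> (phi' s)"
    have s0: "s \<ge> 0" using s t0_nonneg by simp
    have bnd1: "\<bar>phi s $ (ehd e,k) - phi s $ (etl e,k)\<bar> \<le> \<phi>b" for e k
    proof -
      have "\<bar>(KT *v phi s) $ (e,k)\<bar> \<le> infnorm (KT *v phi s)" by (rule component_le_infnorm_cart)
      also have "\<dots> \<le> \<phi>b" using A2_bnd s0 unfolding KT_def by blast
      finally show ?thesis unfolding KTa .
    qed
    have bnd2: "\<bar>phi' s $ (ehd e,k) - phi' s $ (etl e,k)\<bar> \<le> \<phi>db" for e k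
    proof -
      have "\<bar>(KT *v phi' s) $ (e,k)\<bar> \<le> infnorm (KT *v phi' s)" by (rule component_le_infnorm_cart)
      also have "\<dots> \<le> \<phi>db" using A2_dbnd s0 unfolding KT_def by blast
      finally show ?thesis unfolding KTa .
    qed
    have d0: "(\<Sum>i\<in>UNIV. d $ (i,k)) = 0" for k
    proof -
      have "(\<Sum>i\<in>UNIV. d $ (i,k)) = \<gamma> * (\<Sum>i\<in>UNIV. \<psi> (phi s) $ (i,k)) + (\<Sum>i\<in>UNIV. \<psi> (phi' s) $ (i,k))"
        by (simp add: d_def sum.distrib sum_distrib_left)
      also have "\<dots> = 0" unfolding \<psi>a psi_sum0 by simp
      finally show ?thesis .
    qed
    have dB: "\<bar>d $ (i,k)\<bar> \<le> Dc" for i k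
    proof -
      have p1: "\<bar>\<psi> (phi s) $ (i,k)\<bar> \<le> Kc * (real CARD('e) * \<phi>b)"
        unfolding \<psi>a by (rule psi_bound[OF Kc bnd1 Kc0])
      have p2: "\<bar>\<psi> (phi' s) $ (i,k)\<bar> \<le> Kc * (real CARD('e) * \<phi>db)"
        unfolding \<psi>a by (rule psi_bound[OF Kc bnd2 Kc0])
      have "\<bar>d $ (i,k)\<bar> = \<bar>\<gamma> * \<psi> (phi s) $ (i,k) + \<psi> (phi' s) $ (i,k)\<bar>" by (simp add: d_def)
      also have "\<dots> \<le> \<bar>\<gamma> * \<psi> (phi s) $ (i,k)\<bar> + \<bar>\<psi> (phi' s) $ (i,k)\<bar>" by (rule abs_triangle_ineq)
      also have "\<bar>\<gamma> * \<psi> (phi s) $ (i,k)\<bar> = \<gamma> * \<bar>\<psi> (phi s) $ (i,k)\<bar>" using gamma_pos by (simp add: abs_mult)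
      also have "\<gamma> * \<bar>\<psi> (phi s) $ (i,k)\<bar> \<le> \<gamma> * (Kc * (real CARD('e) * \<phi>b))"
        using p1 gamma_pos by (simp add: mult_left_mono)
      finally have "\<bar>d $ (i,k)\<bar> \<le> \<gamma> * (Kc * (real CARD('e) * \<phi>b)) + Kc * (real CARD('e) * \<phi>db)"
        using p2 by linarith
      also have "\<dots> = Dc" unfolding Dc_def by (simp add: algebra_simps)
      finally show ?thesis .
    qed
    have cr: "inner xs d \<le> NN * Kc * Dc * (\<Sum>k\<in>UNIV. \<Sum>e\<in>UNIV. \<bar>xs $ (ehd e,k) - xs $ (etl e,k)\<bar>)"
      unfolding NN_def by (rule cross_bound[OF d0 dB Kc Kc0])
    have sy: "(\<Sum>k\<in>UNIV. \<Sum>e\<in>UNIV. \<bar>xs $ (ehd e,k) - xs $ (etl e,k)\<bar>) = (\<Sum>j\<in>UNIV. \<bar>y $ j\<bar>)"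
    proof -
      have "(\<Sum>j\<in>UNIV. \<bar>y $ j\<bar>) = (\<Sum>e\<in>UNIV. \<Sum>k\<in>UNIV. \<bar>y $ (e,k)\<bar>)" by (rule sum_UNIV_pair)
      also have "\<dots> = (\<Sum>e\<in>UNIV. \<Sum>k\<in>UNIV. \<bar>xs $ (ehd e,k) - xs $ (etl e,k)\<bar>)"
        by (simp add: KTxs1[symmetric] KTa)
      also have "\<dots> = (\<Sum>k\<in>UNIV. \<Sum>e\<in>UNIV. \<bar>xs $ (ehd e,k) - xs $ (etl e,k)\<bar>)" by (rule sum.swap)
      finally show ?thesis by simp
    qed
    define S where "S = (\<Sum>j\<in>UNIV. \<bar>y $ j\<bar>)"
    have F1: "hh s \<le> \<beta> + inner xs (\<psi> (phi' s))" using hh_eq fil by simp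
    have F2: "\<beta> = - \<gamma> * P s + \<gamma> * inner xs (\<psi> (phi s)) - \<kappa>s * S"
      unfolding \<beta>_def ixz S_def by (simp add: algebra_simps)
    have F3: "inner xs d = \<gamma> * inner xs (\<psi> (phi s)) + inner xs (\<psi> (phi' s))"
      by (simp add: d_def inner_add_right)
    have F4: "inner xs d \<le> \<kappa>s * S" using cr unfolding sy \<kappa>s_def S_def .
    show ?thesis using F1 F2 F3 F4 by linarith
  qed
  have kpos: "snd (v s) $ j \<ge> 0" if "t0 \<le> s" "s \<notin> N" for s j
  proof -
    have "inner ((0::real^('n\<times>'r)), - axis j (1::real)) (v s) \<le> 0"
    proof (rule filippov_halfspace[OF vN[OF that(2,1)]])
      fix \<epsilon> :: real assume "\<epsilon> > 0"
      then show "\<exists>\<delta>>0. \<forall>x'\<in>ball (w s) \<delta>. inner ((0::real^('n\<times>'r)), - axis j (1::real)) (estimator_field etl ehd \<gamma> phi s x') \<le> 0 + \<epsilon>"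
        by (intro exI[of _ 1]) (auto simp: estimator_field_def Let_def inner_axis' vabs_def inner_real_def)
    qed
    moreover have "inner ((0::real^('n\<times>'r)), - axis j (1::real)) (v s) = - snd (v s) $ j"
      by (cases "v s") (simp add: inner_axis' inner_real_def)
    ultimately show ?thesis by simp
  qed
  have Pcont: "continuous_on {a..b} P" if "t0 \<le> a" for a b
  proof -
    have "continuous_on {a..b} (\<lambda>t. \<Sum>c\<in>UNIV. (X t $ c)^2)"
      by (intro continuous_on_sum continuous_on_power acf_cont[OF acfX that])
    moreover have "P = (\<lambda>t. \<Sum>c\<in>UNIV. (X t $ c)^2)" by (simp add: P_def fun_eq_iff)
    ultimately show ?thesis by simp
  qed
  have P0: "P t \<ge> 0" for t unfolding P_def by (intro sum_nonneg) auto
  have Q0: "Q t \<ge> 0" for t unfolding Q_def by (intro sum_nonneg) auto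
  have E0: "E t \<ge> 0" for t unfolding E_def using P0[of t] Q0[of t] by simp
  have Pi: "P integrable_on {a..b}" if "t0 \<le> a" for a b
    by (rule integrable_continuous_real[OF Pcont[OF that]])
  have EI: "E b + \<gamma> * integral {a..b} P \<le> E a" if ab: "t0 \<le> a" "a \<le> b" for a b
  proof -
    have "integral {a..b} hh \<le> integral {a..b} (\<lambda>s. - \<gamma> * P s)"
    proof (rule integral_le_ae[OF N energy(2)[OF ab]])
      show "(\<lambda>s. - \<gamma> * P s) integrable_on {a..b}" by (rule integrable_on_mult_right[OF Pi[OF ab(1)]])
      fix s assume "s \<in> {a..b}" "s \<notin> N"
      then show "hh s \<le> - \<gamma> * P s" using ptw ab by auto
    qed
    also have "\<dots> = - \<gamma> * integral {a..b} P" by simp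
    finally show ?thesis using energy(1)[OF ab] by simp
  qed
  have Emono: "E b \<le> E a" if ab: "t0 \<le> a" "a \<le> b" for a b
  proof -
    have "integral {a..b} P \<ge> 0" by (rule integral_nonneg[OF Pi[OF ab(1)]]) (use P0 in auto)
    then show ?thesis using EI[OF ab] gamma_pos by (smt (verit) mult_nonneg_nonneg)
  qed
  have Kmono: "snd (w a) $ j \<le> snd (w b) $ j" if ab: "t0 \<le> a" "a \<le> b" for a b j
  proof -
    have vi2: "(\<lambda>s. snd (v s) $ j) integrable_on {a..b}"
      using acf_int[OF acfK0 ab(1)] by (simp add: absolutely_integrable_on_def)
    have "integral {a..b} (\<lambda>s. 0::real) \<le> integral {a..b} (\<lambda>s. snd (v s) $ j)"
      by (rule integral_le_ae[OF N integrable_0 vi2]) (use kpos ab in auto)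
    moreover have "snd (w b) $ j - snd (w a) $ j = integral {a..b} (\<lambda>s. snd (v s) $ j)"
      by (rule acf_diff[OF acfK0 ab])
    ultimately show ?thesis by simp
  qed
  have Kbnd: "snd (w t) $ j \<le> \<kappa>s + 1 + 2 * E t0" if t: "t0 \<le> t" for t j
  proof -
    define K where "K = snd (w t) $ j - \<kappa>s"
    have "K^2 \<le> Q t" unfolding K_def Q_def by (rule member_le_sum) auto
    also have "\<dots> \<le> 2 * E t" unfolding E_def using P0[of t] by simp
    also have "\<dots> \<le> 2 * E t0" using Emono[OF order_refl t] by simp
    finally have K2: "K^2 \<le> 2 * E t0" .
    have "K \<le> 1 + 2 * E t0"
    proof (cases "K \<le> 1")
      case True then show ?thesis using E0[of t0] by simp
    next
      case False
      then have "K \<le> K^2" by (simp add: power2_eq_square)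
      then show ?thesis using K2 by simp
    qed
    then show ?thesis unfolding K_def by simp
  qed
  have "\<forall>j. \<exists>L. ((\<lambda>t. snd (w t) $ j) \<longlongrightarrow> L) at_top"
  proof
    fix j
    show "\<exists>L. ((\<lambda>t. snd (w t) $ j) \<longlongrightarrow> L) at_top"
      by (rule mono_lim[of t0 "\<lambda>t. snd (w t) $ j" "\<kappa>s + 1 + 2 * E t0"]) (use Kmono Kbnd in auto)
  qed
  then obtain Lk where Lk: "\<And>j. ((\<lambda>t. snd (w t) $ j) \<longlongrightarrow> Lk j) at_top" by metis
  have Qlim: "(Q \<longlongrightarrow> (\<Sum>j\<in>UNIV. (Lk j - \<kappa>s)^2)) at_top"
  proof -
    have "((\<lambda>t. \<Sum>j\<in>UNIV. (snd (w t) $ j - \<kappa>s)^2) \<longlongrightarrow> (\<Sum>j\<in>UNIV. (Lk j - \<kappa>s)^2)) at_top"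
      by (intro tendsto_sum tendsto_power tendsto_diff Lk tendsto_const)
    moreover have "Q = (\<lambda>t. \<Sum>j\<in>UNIV. (snd (w t) $ j - \<kappa>s)^2)" by (simp add: Q_def fun_eq_iff)
    ultimately show ?thesis by simp
  qed
  obtain LE0 where "((\<lambda>t. - E t) \<longlongrightarrow> LE0) at_top"
    using mono_lim[of t0 "\<lambda>t. - E t" 0] Emono E0 by fastforce
  then have Elim: "(E \<longlongrightarrow> - LE0) at_top" using tendsto_minus by fastforce
  define LP where "LP = 2 * (- LE0) - (\<Sum>j\<in>UNIV. (Lk j - \<kappa>s)^2)"
  have Plim: "(P \<longlongrightarrow> LP) at_top"
  proof -
    have "((\<lambda>t. 2 * E t - Q t) \<longlongrightarrow> LP) at_top" unfolding LP_def
      by (intro tendsto_diff tendsto_mult tendsto_const Elim Qlim)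
    moreover have "(\<lambda>t. 2 * E t - Q t) = P" by (simp add: E_def fun_eq_iff)
    ultimately show ?thesis by simp
  qed
  have LP0: "LP \<ge> 0"
    by (rule tendsto_lowerbound[OF Plim]) (auto intro: always_eventually P0)
  have "LP = 0"
  proof (rule ccontr)
    assume "LP \<noteq> 0"
    then have LPp: "LP > 0" using LP0 by simp
    have "eventually (\<lambda>t. LP / 2 < P t) at_top"
      by (rule order_tendstoD(1)[OF Plim]) (use LPp in simp)
    then obtain T1 where T1: "\<And>t. t \<ge> T1 \<Longrightarrow> LP / 2 < P t"
      unfolding eventually_at_top_linorder by blast
    define T2 where "T2 = max T1 t0"
    have T2: "t0 \<le> T2" "T1 \<le> T2" unfolding T2_def by auto
    define b where "b = T2 + 2 * E T2 / (\<gamma> * LP) + 1"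
    have rat: "2 * E T2 / (\<gamma> * LP) \<ge> 0" using E0[of T2] gamma_pos LPp by simp
    then have Tb: "T2 \<le> b" unfolding b_def by simp
    have "integral {T2..b} (\<lambda>s. LP / 2) \<le> integral {T2..b} P"
      by (rule integral_le[OF integrable_const_ivl Pi[OF T2(1)]]) (use T1 T2 in \<open>auto intro: less_imp_le\<close>)
    moreover have "integral {T2..b} (\<lambda>s. LP / 2) = (b - T2) * (LP / 2)" using Tb by simp
    ultimately have "(b - T2) * (LP / 2) \<le> integral {T2..b} P" by linarith
    then have "\<gamma> * ((b - T2) * (LP / 2)) \<le> \<gamma> * integral {T2..b} P"
      using gamma_pos by (simp add: mult_left_mono)
    also have "\<dots> \<le> E T2 - E b" using EI[OF T2(1) Tb] by simp
    also have "\<dots> \<le> E T2" using E0[of b] by simp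
    finally have ineq: "\<gamma> * ((b - T2) * (LP / 2)) \<le> E T2" .
    have "\<gamma> * ((b - T2) * (LP / 2)) = E T2 + \<gamma> * LP / 2"
      unfolding b_def using gamma_pos LPp by (simp add: field_simps)
    then show False using ineq gamma_pos LPp by (smt (verit) mult_pos_pos half_gt_zero)
  qed
  with Plim have Plim0: "(P \<longlongrightarrow> 0) at_top" by simp
  have Xc: "((\<lambda>t. X t $ c) \<longlongrightarrow> 0) at_top" for c
  proof -
    have "((\<lambda>t. (X t $ c)^2) \<longlongrightarrow> 0) at_top"
    proof (rule tendsto_sandwich[OF _ _ tendsto_const Plim0])
      show "eventually (\<lambda>t. 0 \<le> (X t $ c)^2) at_top" by simp
      show "eventually (\<lambda>t. (X t $ c)^2 \<le> P t) at_top"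
        unfolding P_def by (intro always_eventually allI member_le_sum) auto
    qed
    then have "((\<lambda>t. sqrt ((X t $ c)^2)) \<longlongrightarrow> sqrt 0) at_top" by (rule tendsto_real_sqrt)
    then have "((\<lambda>t. \<bar>X t $ c\<bar>) \<longlongrightarrow> 0) at_top" by simp
    then show ?thesis by (simp add: tendsto_rabs_zero_iff)
  qed
  have "(X \<longlongrightarrow> 0) at_top"
    by (rule vec_tendstoI) (use Xc in simp)
  moreover have "X = (\<lambda>t. fst (w t) + phi t - vkron ones (phibar (phi t)))" by (simp add: X_def fun_eq_iff)
  ultimately show ?thesis by simp
qed

end
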